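(* Let $\xi\in\mathbb{R}$, $\alpha\ne0$ and $c>0$, let $\phi(u)=(1+u)^3(1-u)^3$ for $|u|\le1$ and $\phi(u)=0$ otherwise, and define $G:\mathbb{R}\to\mathbb{R}$ by $G(x)=x+\alpha\,\phi\big(\frac{x-\xi}{c}\big)(x-\xi)|x-\xi|$. If $c<\frac{1}{6|\alpha|}$, then $G'(x)>0$ for all $x\in\mathbb{R}$, $G'(x)=1$ for all $x$ with $|x-\xi|>c$, and therefore $G$ has a global inverse $G^{-1}$. *)

theory Defs
  imports "HOL-Analysis.Analysis"
begin

definition bump :: "real \<Rightarrow> real" where
  "bump u = (if \<bar>u\<bar> \<le> 1 then (1 + u)^3 * (1 - u)^3 else 0)"

definition Gmap :: "real \<Rightarrow> real \<Rightarrow> real \<Rightarrow> real \<Rightarrow> real" where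
  "Gmap \<xi> \<alpha> c x = x + \<alpha> * bump ((x - \<xi>) / c) * (x - \<xi>) * \<bar>x - \<xi>\<bar>"

end

theory Submission
  imports Defs
begin

lemma cube_max_deriv: "((\<lambda>s::real. (max 0 s)^3) has_real_derivative 3*(max 0 s)^2) (at s)"
proof (cases "s = 0")
  case True
  have "((\<lambda>h::real. ((max 0 (0 + h))^3 - (max 0 0)^3) / h) \<longlongrightarrow> 0) (at 0)"
  proof (rule filterlim_at_split[THEN iffD2], rule conjI)
    have "((\<lambda>h::real. 0) \<longlongrightarrow> 0) (at_left 0)" by simp
    moreover have "eventually (\<lambda>h::real. 0 = ((max 0 (0 + h))^3 - (max 0 0)^3) / h) (at_left 0)"
      unfolding eventually_at_left_field by (rule exI[of _ "-1"]) auto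
    ultimately show "((\<lambda>h::real. ((max 0 (0 + h))^3 - (max 0 0)^3) / h) \<longlongrightarrow> 0) (at_left 0)"
      by (rule tendsto_cong[THEN iffD1, rotated])
  next
    have "((\<lambda>h::real. h^2) \<longlongrightarrow> 0) (at_right 0)"
      by (auto intro!: tendsto_eq_intros)
    moreover have "eventually (\<lambda>h::real. h^2 = ((max 0 (0 + h))^3 - (max 0 0)^3) / h) (at_right 0)"
      unfolding eventually_at_right_field by (rule exI[of _ "1"]) (auto simp: power3_eq_cube power2_eq_square)
    ultimately show "((\<lambda>h::real. ((max 0 (0 + h))^3 - (max 0 0)^3) / h) \<longlongrightarrow> 0) (at_right 0)"
      by (rule tendsto_cong[THEN iffD1, rotated])
  qed
  then show ?thesis using True by (simp add: DERIV_def)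
next
  case False
  show ?thesis
  proof (cases "s > 0")
    case True
    have ev: "eventually (\<lambda>y. (max 0 y)^3 = y^3) (nhds s)"
      using eventually_nhds_in_open[of "{0<..}" s] True
      by (auto elim!: eventually_mono)
    have "((\<lambda>y. y^3) has_real_derivative 3 * s ^ 2) (at s)"
      by (auto intro!: derivative_eq_intros)
    then show ?thesis using True
      by (subst DERIV_cong_ev[OF refl ev refl]) simp
  next
    case f: False
    with False have "s < 0" by simp
    have ev: "eventually (\<lambda>y. (max 0 y)^3 = (0::real)) (nhds s)"
      using eventually_nhds_in_open[of "{..<0}" s] \<open>s < 0\<close>
      by (auto elim!: eventually_mono)
    show ?thesis using \<open>s < 0\<close>
      by (subst DERIV_cong_ev[OF refl ev refl]) simp
  qed
qed

lemma tabs_deriv: "((\<lambda>t::real. t * \<bar>t\<bar>) has_real_derivative 2*\<bar>t\<bar>) (at t)"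
proof (cases "t = 0")
  case True
  have "((\<lambda>h::real. ((0 + h) * \<bar>0 + h\<bar> - 0 * \<bar>0\<bar>) / h) \<longlongrightarrow> 0) (at 0)"
  proof -
    have "((\<lambda>h::real. \<bar>h\<bar>) \<longlongrightarrow> 0) (at 0)"
      by (auto intro!: tendsto_eq_intros)
    moreover have "eventually (\<lambda>h::real. \<bar>h\<bar> = ((0 + h) * \<bar>0 + h\<bar> - 0 * \<bar>0\<bar>) / h) (at 0)"
      by (auto simp: eventually_at_filter)
    ultimately show ?thesis by (rule tendsto_cong[THEN iffD1, rotated])
  qed
  then show ?thesis using True by (simp add: DERIV_def)
next
  case False
  show ?thesis
  proof (cases "t > 0")
    case True
    have ev: "eventually (\<lambda>y. y * \<bar>y\<bar> = y^2) (nhds t)"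
      using eventually_nhds_in_open[of "{0<..}" t] True
      by (auto elim!: eventually_mono simp: power2_eq_square)
    have "((\<lambda>y. y^2) has_real_derivative 2*t) (at t)"
      by (auto intro!: derivative_eq_intros)
    then show ?thesis using True
      by (subst DERIV_cong_ev[OF refl ev refl]) simp
  next
    case f: False
    with False have "t < 0" by simp
    have ev: "eventually (\<lambda>y. y * \<bar>y\<bar> = - (y^2)) (nhds t)"
      using eventually_nhds_in_open[of "{..<0}" t] \<open>t < 0\<close>
      by (auto elim!: eventually_mono simp: power2_eq_square)
    have "((\<lambda>y. - (y^2)) has_real_derivative - (2*t)) (at t)"
      by (auto intro!: derivative_eq_intros)
    then show ?thesis using \<open>t < 0\<close>
      by (subst DERIV_cong_ev[OF refl ev refl]) simp
  qed
qed

lemma bump_alt: "bump u = (max 0 (1 - u^2))^3"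
  unfolding bump_def
  by (auto simp: abs_le_iff power_mult_distrib[symmetric] algebra_simps power2_eq_square
      intro!: arg_cong[where f="\<lambda>x. x^3"]) (auto simp: max_def abs_square_le_1[unfolded power2_eq_square] abs_le_iff)

lemma cube_max_chain:
  assumes "(g has_real_derivative g') (at x)"
  shows "((\<lambda>x. (max 0 (g x))^3) has_real_derivative 3*(max 0 (g x))^2 * g') (at x)"
  using DERIV_chain2[OF cube_max_deriv assms] .

lemma tabs_chain:
  assumes "(g has_real_derivative g') (at x)"
  shows "((\<lambda>x. g x * \<bar>g x\<bar>) has_real_derivative 2*\<bar>g x\<bar> * g') (at x)"
  using DERIV_chain2[OF tabs_deriv assms] .

lemma G_alt: "Gmap \<xi> \<alpha> c = (\<lambda>x. x + \<alpha> * (max 0 (1 - ((x - \<xi>)/c)^2))^3 * ((x - \<xi>) * \<bar>x - \<xi>\<bar>))"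
  by (auto simp: Gmap_def bump_alt fun_eq_iff)

lemma G_deriv:
  assumes "c \<noteq> 0" shows "(Gmap \<xi> \<alpha> c has_real_derivative
     1 + \<alpha> * (3*(max 0 (1 - ((x - \<xi>)/c)^2))^2 * (- (2 * ((x - \<xi>)/c) * (1/c))) * ((x - \<xi>) * \<bar>x - \<xi>\<bar>)
        + (max 0 (1 - ((x - \<xi>)/c)^2))^3 * (2*\<bar>x - \<xi>\<bar> * 1))) (at x)"
proof -
  have i1: "((\<lambda>x. 1 - ((x - \<xi>)/c)^2) has_real_derivative - (2 * ((x - \<xi>)/c) * (1/c))) (at x)"
    using assms by (auto intro!: derivative_eq_intros)
  have i2: "((\<lambda>x. x - \<xi>) has_real_derivative 1) (at x)"
    by (auto intro!: derivative_eq_intros)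
  note d1 = cube_max_chain[OF i1] and d2 = tabs_chain[OF i2]
  have "((\<lambda>x. x + \<alpha> * ((max 0 (1 - ((x - \<xi>)/c)^2))^3 * ((x - \<xi>) * \<bar>x - \<xi>\<bar>))) has_real_derivative
     1 + \<alpha> * (3*(max 0 (1 - ((x - \<xi>)/c)^2))^2 * (- (2 * ((x - \<xi>)/c) * (1/c))) * ((x - \<xi>) * \<bar>x - \<xi>\<bar>)
        + (max 0 (1 - ((x - \<xi>)/c)^2))^3 * (2*\<bar>x - \<xi>\<bar> * 1))) (at x)"
    using DERIV_add[OF DERIV_ident DERIV_cmult[OF DERIV_mult[OF d1 d2], of \<alpha>]] by (simp only: mult.commute)
  moreover have "Gmap \<xi> \<alpha> c = (\<lambda>x. x + \<alpha> * ((max 0 (1 - ((x - \<xi>)/c)^2))^3 * ((x - \<xi>) * \<bar>x - \<xi>\<bar>)))"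
    unfolding G_alt by (simp add: mult.assoc)
  ultimately show ?thesis by simp
qed

lemma key_bound:
  fixes c u m :: real
  assumes c: "c > 0" and m: "m = max 0 (1 - u^2)"
  shows "\<bar>c * \<bar>u\<bar> * m^2 * (2*m - 6*u^2)\<bar> \<le> 6 * c"
proof (cases "m = 0")
  case True then show ?thesis using c by simp
next
  case False
  then have m1: "m = 1 - u^2" and u2: "u^2 < 1" using m by (auto simp: max_def split: if_splits)
  have m0: "0 \<le> m" "m \<le> 1" using m1 u2 by (auto simp: power2_eq_square)
  have ua: "\<bar>u\<bar> \<le> 1" using u2 by (simp add: abs_square_less_1 less_imp_le)
  have u0: "0 \<le> u^2" by simp
  have b: "\<bar>2*m - 6*u^2\<bar> \<le> 6" using m0 u2 u0 by linarith
  have m2: "m^2 \<le> 1" using m0 by (simp add: power_le_one)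
  have "\<bar>c * \<bar>u\<bar> * m^2 * (2*m - 6*u^2)\<bar> = c * (\<bar>u\<bar> * (m^2 * \<bar>2*m - 6*u^2\<bar>))"
    using c by (simp add: abs_mult)
  also have "\<dots> \<le> c * (1 * (1 * 6))"
    using c ua m2 b
    by (intro mult_left_mono mult_mono) auto
  finally show ?thesis by simp
qed

theorem lemma2p4:
  fixes \<xi> \<alpha> c :: real
  assumes "\<alpha> \<noteq> 0" and "c > 0" and "c < 1 / (6 * \<bar>\<alpha>\<bar>)"
  shows "(\<forall>x. \<exists>D. (Gmap \<xi> \<alpha> c has_real_derivative D) (at x) \<and> D > 0)
       \<and> (\<forall>x. \<bar>x - \<xi>\<bar> > c \<longrightarrow> (Gmap \<xi> \<alpha> c has_real_derivative 1) (at x))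
       \<and> bij (Gmap \<xi> \<alpha> c)"
proof -
  have cne: "c \<noteq> 0" using assms by simp
  have ac: "6 * c * \<bar>\<alpha>\<bar> < 1"
    using assms(3) assms(1) by (simp add: field_simps)
  have pos: "\<exists>D. (Gmap \<xi> \<alpha> c has_real_derivative D) (at x) \<and> D > 0" for x
  proof -
    define u where "u = (x - \<xi>)/c"
    define m where "m = max 0 (1 - u^2)"
    have t: "x - \<xi> = c * u" using cne by (simp add: u_def)
    have eq: "3*(max 0 (1 - ((x - \<xi>)/c)^2))^2 * (- (2 * ((x - \<xi>)/c) * (1/c))) * ((x - \<xi>) * \<bar>x - \<xi>\<bar>)
        + (max 0 (1 - ((x - \<xi>)/c)^2))^3 * (2*\<bar>x - \<xi>\<bar> * 1)
        = c * \<bar>u\<bar> * m^2 * (2*m - 6*u^2)"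
      unfolding m_def u_def[symmetric] t using assms(2)
      by (simp add: abs_mult power2_eq_square power3_eq_cube field_simps)
    have kb: "\<bar>c * \<bar>u\<bar> * m^2 * (2*m - 6*u^2)\<bar> \<le> 6 * c"
      by (rule key_bound[OF assms(2) m_def])
    have "\<bar>\<alpha> * (c * \<bar>u\<bar> * m^2 * (2*m - 6*u^2))\<bar> \<le> \<bar>\<alpha>\<bar> * (6 * c)"
      unfolding abs_mult[of \<alpha>] by (rule mult_left_mono[OF kb]) simp
    then have "1 + \<alpha> * (c * \<bar>u\<bar> * m^2 * (2*m - 6*u^2)) > 0"
      using ac by (simp add: abs_le_iff algebra_simps)
    then show ?thesis using G_deriv[OF cne, of \<xi> \<alpha> x] unfolding eq by blast
  qed
  have one: "(Gmap \<xi> \<alpha> c has_real_derivative 1) (at x)" if "\<bar>x - \<xi>\<bar> > c" for x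
  proof -
    have "((x - \<xi>)/c)^2 > 1"
    proof -
      have "\<bar>(x - \<xi>)/c\<bar> > 1" using that assms(2) by (simp add: abs_divide)
      then have "1*1 < \<bar>(x - \<xi>)/c\<bar> * \<bar>(x - \<xi>)/c\<bar>" by (intro mult_strict_mono) auto
      then show ?thesis by (metis abs_mult_self_eq mult_1 power2_eq_square)
    qed
    then have "max 0 (1 - ((x - \<xi>)/c)^2) = 0" by simp
    then show ?thesis using G_deriv[OF cne, of \<xi> \<alpha> x] by simp
  qed
  have id: "Gmap \<xi> \<alpha> c x = x" if "\<bar>x - \<xi>\<bar> > c" for x
  proof -
    have "\<bar>(x - \<xi>)/c\<bar> > 1" using that assms(2) by (simp add: abs_divide)
    then show ?thesis by (simp add: Gmap_def bump_def)
  qed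
  have mono: "Gmap \<xi> \<alpha> c a < Gmap \<xi> \<alpha> c b" if "a < b" for a b
    by (rule DERIV_pos_imp_increasing[OF that]) (use pos in blast)
  have inj: "inj (Gmap \<xi> \<alpha> c)"
    by (rule strict_mono_imp_inj_on) (auto simp: strict_mono_def mono)
  have cont: "isCont (Gmap \<xi> \<alpha> c) x" for x
    using pos[of x] DERIV_isCont by blast
  have surj: "surj (Gmap \<xi> \<alpha> c)"
  proof (rule surjI[of _ "\<lambda>y. SOME x. Gmap \<xi> \<alpha> c x = y"])
    fix y
    define a where "a = min y (\<xi> - c) - 1"
    define b where "b = max y (\<xi> + c) + 1"
    have ga: "Gmap \<xi> \<alpha> c a = a" proof (rule id)
      have "a \<le> \<xi> - c - 1" by (simp add: a_def)
      then show "c < \<bar>a - \<xi>\<bar>" using assms(2) by linarith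
    qed
    have gb: "Gmap \<xi> \<alpha> c b = b" proof (rule id)
      have "b \<ge> \<xi> + c + 1" by (simp add: b_def)
      then show "c < \<bar>b - \<xi>\<bar>" using assms(2) by linarith
    qed
    have "\<exists>x\<ge>a. x \<le> b \<and> Gmap \<xi> \<alpha> c x = y"
    proof (rule IVT)
      have "a \<le> y" by (simp add: a_def)
      then show "Gmap \<xi> \<alpha> c a \<le> y" by (simp only: ga)
      have "y \<le> b" by (simp add: b_def)
      then show "y \<le> Gmap \<xi> \<alpha> c b" by (simp only: gb)
      show "a \<le> b" unfolding a_def b_def by simp
    qed (use cont in auto)
    then show "Gmap \<xi> \<alpha> c (SOME x. Gmap \<xi> \<alpha> c x = y) = y" by (metis (mono_tags, lifting) someI)
  qed
  show ?thesis using pos one inj surj by (auto simp: bij_def)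
qed

end
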